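(* Let $n,k$ be integers with $1\le k<n$, let $F$ be a finite field with $|F|\ge 2n$, and let $\{\lambda_{i,j}: i\in[n],\ j\in\{0,1\}\}$ be $2n$ distinct elements of $F$. Let $\mathcal{C}$ be the set of all tuples $C=(C_1,\dots,C_n)$ with $C_i=(c_{i,b,a}: b\in\{1,2,3\},\ a\in\{0,1,\dots,2^n-1\})\in F^{3\cdot 2^n}$ satisfying $$\sum_{i=1}^n \lambda_{i,a_i}^t\, c_{i,b,a}=0\quad\text{for all } t\in\{0,1,\dots,n-k-1\},\ b\in\{1,2,3\},\ a\in\{0,1,\dots,2^n-1\},$$ where $(a_1,\dots,a_n)\in\{0,1\}^n$ is the $n$-digit binary expansion of $a$. Then $\mathcal{C}$ is an $(n,k,l=3\cdot 2^n)$ MDS array code which is a $(2,k+1)$-MSR code under the cooperative model, i.e. for every $\mathcal{F}\subseteq[n]$ with $|\mathcal{F}|=2$ and every $\mathcal{R}\subseteq[n]\setminus\mathcal{F}$ with $|\mathcal{R}|=k+1$, the nodes $\{C_i:i\in\mathcal{F}\}$ can be cooperatively repaired from $\{C_j: j\in\mathcal{R}\}$ with total bandwidth $\frac{2(k+2)l}{3}=2(k+2)2^n$ symbols of $F$.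
   Context: $[n]=\{1,\dots,n\}$. An $(n,k,l)$ MDS array code over $F$ is a set of codewords $C=(C_1,\dots,C_n)$ with each node $C_i\in F^l$, forming an $F$-linear code of dimension $kl$, such that the contents of any $k$ nodes determine the whole codeword. Cooperative repair model: given a set $\mathcal{F}$ of failed nodes and a disjoint set $\mathcal{R}$ of helper nodes, each failed node downloads symbols of $F$ computed from the contents of the helper nodes, and the failed nodes may additionally exchange symbols of $F$ computed from the data they hold (their downloaded data) with each other; at the end each failed node $C_i$, $i\in\mathcal{F}$, must be able to recover its full content. $N_{\mathrm{co}}(\mathcal{C},\mathcal{F},\mathcal{R})$ is the minimum, over such schemes, of the total number of symbols of $F$ transmitted between any two distinct nodes (helper-to-failed and failed-to-failed). A code $\mathcal{C}$ is an $(h,d)$-MSR code under the cooperative model if it is an MDS array code and for all $\mathcal{F}\subseteq[n]$, $|\mathcal{F}|=h$, and $\mathcal{R}\subseteq[n]\setminus\mathcal{F}$, $|\mathcal{R}|=d$, one has $N_{\mathrm{co}}(\mathcal{C},\mathcal{F},\mathcal{R})=\frac{h(d+h-1)l}{h+d-k}$ (this value is a known lower bound for any MDS array code). *)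

theory Defs
  imports Complex_Main "HOL-Library.Function_Algebras"
begin

text \<open>An array codeword with n nodes, each node holding l symbols, is encoded as a
function c :: nat => nat => 'f, where c i j is the j-th symbol of node i
(i in {1..n}, j in {0..<l}); it is zero outside this range.\<close>

definition array_space :: "nat \<Rightarrow> nat \<Rightarrow> (nat \<Rightarrow> nat \<Rightarrow> 'f::zero) set" where
  "array_space n l = {c. \<forall>i j. (i \<notin> {1..n} \<or> l \<le> j) \<longrightarrow> c i j = 0}"

definition fscale :: "'f::field \<Rightarrow> (nat \<Rightarrow> nat \<Rightarrow> 'f) \<Rightarrow> (nat \<Rightarrow> nat \<Rightarrow> 'f)" where
  "fscale x c = (\<lambda>i j. x * c i j)"

definition MDS_array_code :: "nat \<Rightarrow> nat \<Rightarrow> nat \<Rightarrow> (nat \<Rightarrow> nat \<Rightarrow> 'f::field) set \<Rightarrow> bool" where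
  "MDS_array_code n k l C \<longleftrightarrow>
     C \<subseteq> array_space n l \<and>
     module.subspace fscale C \<and>
     vector_space.dim fscale C = k * l \<and>
     (\<forall>K. K \<subseteq> {1..n} \<and> card K = k \<longrightarrow>
        (\<forall>c\<in>C. \<forall>c'\<in>C. (\<forall>i\<in>K. c i = c' i) \<longrightarrow> c = c'))"

text \<open>Data downloaded by failed node i from the helpers in Rs, where g j i maps the
content of helper j to the list of symbols it sends to i.\<close>
definition downloaded ::
  "(nat \<Rightarrow> nat \<Rightarrow> (nat \<Rightarrow> 'f) \<Rightarrow> 'f list) \<Rightarrow> nat set \<Rightarrow> nat \<Rightarrow> (nat \<Rightarrow> nat \<Rightarrow> 'f) \<Rightarrow> (nat \<Rightarrow> 'f list)" where
  "downloaded g Rs i c = (\<lambda>j. if j \<in> Rs then g j i (c j) else [])"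

text \<open>Cooperative repair of the failed nodes Fs from helpers Rs with total bandwidth N:
helper j sends beta j i symbols (a function of its content) to failed node i;
failed node i sends gamma i i' symbols (a function of its downloaded data) to failed
node i'; then every failed node recovers its content from its downloaded and received data.\<close>
definition coop_repairable :: "(nat \<Rightarrow> nat \<Rightarrow> 'f) set \<Rightarrow> nat set \<Rightarrow> nat set \<Rightarrow> nat \<Rightarrow> bool" where
  "coop_repairable C Fs Rs N \<longleftrightarrow>
    (\<exists>(beta::nat \<Rightarrow> nat \<Rightarrow> nat) (g::nat \<Rightarrow> nat \<Rightarrow> (nat \<Rightarrow> 'f) \<Rightarrow> 'f list)
      (gamma::nat \<Rightarrow> nat \<Rightarrow> nat) (h::nat \<Rightarrow> nat \<Rightarrow> (nat \<Rightarrow> 'f list) \<Rightarrow> 'f list)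
      (rec::nat \<Rightarrow> (nat \<Rightarrow> 'f list) \<Rightarrow> (nat \<Rightarrow> 'f list) \<Rightarrow> (nat \<Rightarrow> 'f)).
      (\<forall>j\<in>Rs. \<forall>i\<in>Fs. \<forall>x. length (g j i x) = beta j i) \<and>
      (\<forall>i\<in>Fs. \<forall>i'\<in>Fs. i \<noteq> i' \<longrightarrow> (\<forall>y. length (h i i' y) = gamma i i')) \<and>
      (\<forall>i\<in>Fs. \<forall>c\<in>C.
         rec i (downloaded g Rs i c)
               (\<lambda>i'. if i' \<in> Fs \<and> i' \<noteq> i then h i' i (downloaded g Rs i' c) else [])
         = c i) \<and>
      N = (\<Sum>i\<in>Fs. \<Sum>j\<in>Rs. beta j i) + (\<Sum>i\<in>Fs. \<Sum>i'\<in>Fs - {i}. gamma i i'))"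

definition N_co :: "(nat \<Rightarrow> nat \<Rightarrow> 'f) set \<Rightarrow> nat set \<Rightarrow> nat set \<Rightarrow> nat" where
  "N_co C Fs Rs = (LEAST N. coop_repairable C Fs Rs N)"

definition MSR_coop :: "nat \<Rightarrow> nat \<Rightarrow> nat \<Rightarrow> nat \<Rightarrow> nat \<Rightarrow> (nat \<Rightarrow> nat \<Rightarrow> 'f::field) set \<Rightarrow> bool" where
  "MSR_coop n k l h d C \<longleftrightarrow>
     MDS_array_code n k l C \<and>
     (\<forall>Fs Rs. Fs \<subseteq> {1..n} \<and> card Fs = h \<and> Rs \<subseteq> {1..n} - Fs \<and> card Rs = d \<longrightarrow>
        real (N_co C Fs Rs) = real (h * (d + h - 1) * l) / (real h + real d - real k))"

text \<open>i-th binary digit (i >= 1) of a, i.e. a_i with a = sum_i a_i 2^(i-1).\<close>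
definition bin_digit :: "nat \<Rightarrow> nat \<Rightarrow> nat" where
  "bin_digit a i = (a div 2 ^ (i - 1)) mod 2"

text \<open>The code of the paper: symbol c_{i,b,a} (b in {1,2,3}, a < 2^n) is stored at
position (b-1)*2^n + a of node i.\<close>
definition paper_code :: "nat \<Rightarrow> nat \<Rightarrow> (nat \<Rightarrow> nat \<Rightarrow> 'f::field) \<Rightarrow> (nat \<Rightarrow> nat \<Rightarrow> 'f) set" where
  "paper_code n k lam =
     {c \<in> array_space n (3 * 2 ^ n).
        \<forall>t < n - k. \<forall>b \<in> {1,2,3}. \<forall>a < 2 ^ n.
          (\<Sum>i = 1..n. lam i (bin_digit a i) ^ t * c i ((b - 1) * 2 ^ n + a)) = 0}"

end

theory Submission
  imports Defs "HOL-Computational_Algebra.Polynomial" "HOL-Library.FuncSet"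
begin

lemma support_zero:
  fixes P :: "nat \<Rightarrow> 'f::field"
  assumes fin: "finite I" and inj: "inj_on P I"
    and mom: "\<forall>t<r. (\<Sum>i\<in>I. P i ^ t * Y i) = 0"
    and sup: "card {i\<in>I. Y i \<noteq> 0} \<le> r"
  shows "\<forall>i\<in>I. Y i = 0"
proof (rule ccontr)
  assume "\<not> (\<forall>i\<in>I. Y i = 0)"
  then obtain s where sI: "s \<in> I" and Ys: "Y s \<noteq> 0" by auto
  define Z where "Z = {i\<in>I. Y i \<noteq> 0}"
  have finZ: "finite Z" using fin by (simp add: Z_def)
  have sZ: "s \<in> Z" using sI Ys by (simp add: Z_def)
  define q where "q = (\<Prod>s'\<in>Z - {s}. [:- P s', 1:])"
  have "degree q \<le> sum (degree \<circ> (\<lambda>s'. [:- P s', 1:])) (Z - {s})"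
    unfolding q_def using finZ by (intro degree_prod_sum_le) auto
  also have "\<dots> = card (Z - {s})" by simp
  also have "\<dots> < r" using sup sZ finZ unfolding Z_def[symmetric]
    by (metis card_Diff1_less order_less_le_trans)
  finally have degq: "degree q < r" .
  have "(\<Sum>i\<in>I. poly q (P i) * Y i) = (\<Sum>i\<in>I. (\<Sum>t\<le>degree q. coeff q t * P i ^ t) * Y i)"
    by (simp add: poly_altdef)
  also have "\<dots> = (\<Sum>t\<le>degree q. coeff q t * (\<Sum>i\<in>I. P i ^ t * Y i))"
    by (simp add: sum_distrib_left sum_distrib_right mult.assoc sum.swap[of _ I])
  also have "\<dots> = 0" using degq mom by (intro sum.neutral) auto
  finally have S0: "(\<Sum>i\<in>I. poly q (P i) * Y i) = 0" .
  have "(\<Sum>i\<in>I. poly q (P i) * Y i) = poly q (P s) * Y s + (\<Sum>i\<in>I - {s}. poly q (P i) * Y i)"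
    using fin sI by (simp add: sum.remove)
  also have "(\<Sum>i\<in>I - {s}. poly q (P i) * Y i) = 0"
  proof (intro sum.neutral ballI)
    fix i assume i: "i \<in> I - {s}"
    show "poly q (P i) * Y i = 0"
    proof (cases "Y i = 0")
      case False
      then have "i \<in> Z - {s}" using i by (auto simp: Z_def)
      then have "poly q (P i) = 0" unfolding q_def poly_prod using finZ
        by (intro prod_zero) auto
      then show ?thesis by simp
    qed simp
  qed
  finally have "poly q (P s) * Y s = 0" using S0 by simp
  moreover have "poly q (P s) \<noteq> 0"
  proof -
    have "\<forall>s'\<in>Z - {s}. P s - P s' \<noteq> 0"
      using inj sI unfolding Z_def by (auto dest: inj_onD)
    then show ?thesis unfolding q_def poly_prod using finZ
      by (simp add: prod_zero_iff)
  qed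
  ultimately show False using Ys by simp
qed

lemma exists_ext:
  fixes P :: "nat \<Rightarrow> 'f::field" and y :: "nat \<Rightarrow> 'f"
  assumes finF: "finite (UNIV :: 'f set)" and fin: "finite I" and KI: "K \<subseteq> I"
    and inj: "inj_on P I" and cardR: "card (I - K) = r"
  shows "\<exists>z. (\<forall>i\<in>K. z i = y i) \<and> (\<forall>t<r. (\<Sum>i\<in>I. P i ^ t * z i) = 0)"
proof -
  define R where "R = I - K"
  define A where "A = (PiE R (\<lambda>_. UNIV) :: (nat \<Rightarrow> 'f) set)"
  define B where "B = (PiE {..<r} (\<lambda>_. UNIV) :: (nat \<Rightarrow> 'f) set)"
  define M where "M z = restrict (\<lambda>t. \<Sum>i\<in>R. P i ^ t * z i) {..<r}" for z :: "nat \<Rightarrow> 'f"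
  have finR: "finite R" using fin by (simp add: R_def)
  have cA: "card A = card (UNIV :: 'f set) ^ r"
    unfolding A_def using finR cardR by (simp add: card_PiE R_def)
  have cB: "card B = card (UNIV :: 'f set) ^ r"
    unfolding B_def by (simp add: card_PiE)
  have finB: "finite B" unfolding B_def using finF by (intro finite_PiE) auto
  have MAB: "M ` A \<subseteq> B" unfolding M_def B_def by (auto simp: PiE_def extensional_def)
  have injM: "inj_on M A"
  proof (rule inj_onI)
    fix z z' assume z: "z \<in> A" and z': "z' \<in> A" and eq: "M z = M z'"
    have mom: "\<forall>t<r. (\<Sum>i\<in>R. P i ^ t * (z i - z' i)) = 0"
    proof (intro allI impI)
      fix t assume t: "t < r"
      have "(\<Sum>i\<in>R. P i ^ t * z i) = (\<Sum>i\<in>R. P i ^ t * z' i)"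
        using fun_cong[OF eq, of t] t by (simp add: M_def)
      then show "(\<Sum>i\<in>R. P i ^ t * (z i - z' i)) = 0"
        by (simp add: right_diff_distrib sum_subtractf)
    qed
    have "card {i\<in>R. z i - z' i \<noteq> 0} \<le> r"
      using card_mono[OF finR, of "{i\<in>R. z i - z' i \<noteq> 0}"] cardR by (auto simp: R_def)
    then have "\<forall>i\<in>R. z i - z' i = 0"
      using support_zero[OF finR _ mom] inj_on_subset[OF inj] by (auto simp: R_def)
    then show "z = z'" using z z' unfolding A_def
      by (intro PiE_ext) auto
  qed
  have "card (M ` A) = card B" using card_image[OF injM] cA cB by simp
  then have MAeq: "M ` A = B" using card_subset_eq[OF finB MAB] by simp
  define w where "w = restrict (\<lambda>t. - (\<Sum>i\<in>K. P i ^ t * y i)) {..<r}"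
  have "w \<in> B" unfolding w_def B_def by auto
  then obtain z where zA: "z \<in> A" and Mz: "M z = w" using MAeq by force
  define z' where "z' i = (if i \<in> K then y i else z i)" for i
  have "\<forall>t<r. (\<Sum>i\<in>I. P i ^ t * z' i) = 0"
  proof (intro allI impI)
    fix t assume t: "t < r"
    have finK: "finite K" using fin KI finite_subset by blast
    have "(\<Sum>i\<in>I. P i ^ t * z' i) = (\<Sum>i\<in>K. P i ^ t * z' i) + (\<Sum>i\<in>R. P i ^ t * z' i)"
      unfolding R_def using sum.subset_diff[OF KI fin] by (simp add: add.commute)
    also have "(\<Sum>i\<in>K. P i ^ t * z' i) = (\<Sum>i\<in>K. P i ^ t * y i)"
      by (simp add: z'_def)
    also have "(\<Sum>i\<in>R. P i ^ t * z' i) = (\<Sum>i\<in>R. P i ^ t * z i)"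
      by (intro sum.cong) (auto simp: z'_def R_def)
    also have "\<dots> = w t" using fun_cong[OF Mz, of t] t by (simp add: M_def)
    also have "w t = - (\<Sum>i\<in>K. P i ^ t * y i)" using t by (simp add: w_def)
    finally show "(\<Sum>i\<in>I. P i ^ t * z' i) = 0" by simp
  qed
  then show ?thesis by (intro exI[of _ z']) (auto simp: z'_def)
qed

lemma bin_digit_le1: "bin_digit a i \<le> 1"
  unfolding bin_digit_def by simp

lemma bin_digit_01: "bin_digit a i \<in> {0,1}"
  unfolding bin_digit_def by auto

lemma pos_decomp:
  fixes j L :: nat
  assumes "j < 3 * L"
  shows "\<exists>b\<in>{1,2,3}. \<exists>a<L. j = (b - 1) * L + a"
proof -
  have L: "L > 0" using assms by auto
  have "j div L < 3" using assms by (simp add: div_less_iff_less_mult mult.commute)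
  then have "j div L + 1 \<in> {1,2,3}" by auto
  moreover have "j mod L < L" using L by simp
  moreover have "j = (j div L + 1 - 1) * L + j mod L" by simp
  ultimately show ?thesis by blast
qed

context
  fixes n k :: nat and lam :: "nat \<Rightarrow> nat \<Rightarrow> 'f::field"
  assumes finF: "finite (UNIV :: 'f set)"
    and k1: "1 \<le> k" and kn: "k < n"
    and injl: "inj_on (\<lambda>(i, j). lam i j) ({1..n} \<times> {0, 1})"
begin

lemma lam_inj:
  assumes "i \<in> {1..n}" "i' \<in> {1..n}" "u \<in> {0,1}" "u' \<in> {0,1}" "lam i u = lam i' u'"
  shows "i = i' \<and> u = u'"
proof -
  have "(i, u) = (i', u')"
    using inj_onD[OF injl, of "(i,u)" "(i',u')"] assms by auto
  then show ?thesis by simp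
qed

lemma inj_col: "inj_on (\<lambda>i. lam i (bin_digit a i)) {1..n}"
  by (rule inj_onI) (use lam_inj bin_digit_01 in blast)

lemma memC: "c \<in> paper_code n k lam \<longleftrightarrow> c \<in> array_space n (3 * 2 ^ n) \<and>
   (\<forall>t < n - k. \<forall>b \<in> {1,2,3}. \<forall>a < 2 ^ n.
          (\<Sum>i = 1..n. lam i (bin_digit a i) ^ t * c i ((b - 1) * 2 ^ n + a)) = 0)"
  unfolding paper_code_def by simp

lemma arr_zero: "c \<in> paper_code n k lam \<Longrightarrow> i \<notin> {1..n} \<or> 3 * 2 ^ n \<le> j \<Longrightarrow> c i j = 0"
  unfolding paper_code_def array_space_def by auto

lemma diff_C: "c \<in> paper_code n k lam \<Longrightarrow> c' \<in> paper_code n k lam \<Longrightarrow> c - c' \<in> paper_code n k lam"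
  unfolding memC array_space_def
  by (auto simp: right_diff_distrib sum_subtractf)

lemma add_C: "c \<in> paper_code n k lam \<Longrightarrow> c' \<in> paper_code n k lam \<Longrightarrow> c + c' \<in> paper_code n k lam"
  unfolding memC array_space_def
  by (auto simp: distrib_left sum.distrib)

lemma scale_C: "c \<in> paper_code n k lam \<Longrightarrow> fscale x c \<in> paper_code n k lam"
proof -
  assume c: "c \<in> paper_code n k lam"
  have "(\<Sum>i = 1..n. lam i (bin_digit a i) ^ t * (x * c i j)) = x * (\<Sum>i = 1..n. lam i (bin_digit a i) ^ t * c i j)" for a t j
    by (simp add: sum_distrib_left mult.left_commute)
  then show ?thesis using c unfolding memC array_space_def fscale_def by auto
qed

lemma zero_C: "0 \<in> paper_code n k lam"
  unfolding memC array_space_def by simp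

lemma uniq_C:
  assumes c: "c \<in> paper_code n k lam" and c': "c' \<in> paper_code n k lam"
    and K: "K \<subseteq> {1..n}" "card K = k" and eq: "\<forall>i\<in>K. \<forall>j < 3 * 2 ^ n. c i j = c' i j"
  shows "c = c'"
proof (intro ext)
  fix i j
  show "c i j = c' i j"
  proof (cases "i \<in> {1..n} \<and> j < 3 * 2 ^ n")
    case False
    then show ?thesis using arr_zero[OF c] arr_zero[OF c'] by auto
  next
    case True
    then obtain b a where b: "b \<in> {1,2,3}" and a: "a < 2 ^ n" and j: "j = (b - 1) * 2 ^ n + a"
      using pos_decomp by blast
    define Y where "Y i = c i j - c' i j" for i
    have mom: "\<forall>t<n-k. (\<Sum>i\<in>{1..n}. lam i (bin_digit a i) ^ t * Y i) = 0"
      using c c' b a unfolding memC Y_def j by (auto simp: right_diff_distrib sum_subtractf)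
    have "{i\<in>{1..n}. Y i \<noteq> 0} \<subseteq> {1..n} - K" using eq True by (auto simp: Y_def)
    then have "card {i\<in>{1..n}. Y i \<noteq> 0} \<le> n - k"
      using card_mono[of "{1..n} - K"] card_Diff_subset[of K "{1..n}"] K finite_subset[OF K(1)]
      by fastforce
    from support_zero[OF _ inj_col mom this] True show ?thesis by (simp add: Y_def)
  qed
qed

lemma info_exists:
  assumes K: "K \<subseteq> {1..n}" "card K = k"
  shows "\<exists>c\<in>paper_code n k lam. \<forall>i\<in>K. \<forall>j < 3 * 2 ^ n. c i j = v i j"
proof -
  have "\<forall>j. \<exists>z. (\<forall>i\<in>K. z i = v i j) \<and>
     (\<forall>t<n-k. (\<Sum>i\<in>{1..n}. lam i (bin_digit (j mod 2^n) i) ^ t * z i) = 0)"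
  proof
    fix j
    have "card ({1..n} - K) = n - k" using K by (simp add: card_Diff_subset finite_subset)
    from exists_ext[OF finF _ K(1) inj_col this] show "\<exists>z. (\<forall>i\<in>K. z i = v i j) \<and>
     (\<forall>t<n-k. (\<Sum>i\<in>{1..n}. lam i (bin_digit (j mod 2^n) i) ^ t * z i) = 0)" by simp
  qed
  then obtain Z where Z: "\<And>j. (\<forall>i\<in>K. Z j i = v i j) \<and>
     (\<forall>t<n-k. (\<Sum>i\<in>{1..n}. lam i (bin_digit (j mod 2^n) i) ^ t * Z j i) = 0)"
    by metis
  define c where "c i j = (if i \<in> {1..n} \<and> j < 3 * 2 ^ n then Z j i else 0)" for i j
  have "c \<in> paper_code n k lam"
    unfolding memC
  proof (intro conjI allI impI ballI)
    show "c \<in> array_space n (3 * 2 ^ n)" unfolding array_space_def c_def by auto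
  next
    fix t b a assume t: "t < n - k" and b: "b \<in> {1::nat,2,3}" and a: "a < (2::nat) ^ n"
    define j where "j = (b - 1) * 2 ^ n + a"
    have jl: "j < 3 * 2 ^ n" using b a by (auto simp: j_def)
    have jm: "j mod 2 ^ n = a" using a by (simp add: j_def)
    have "(\<Sum>i = 1..n. lam i (bin_digit a i) ^ t * c i j) = (\<Sum>i = 1..n. lam i (bin_digit (j mod 2^n) i) ^ t * Z j i)"
      using jl jm by (intro sum.cong) (auto simp: c_def)
    also have "\<dots> = 0" using Z t by blast
    finally show "(\<Sum>i = 1..n. lam i (bin_digit a i) ^ t * c i ((b - 1) * 2 ^ n + a)) = 0"
      by (simp add: j_def)
  qed
  moreover have "\<forall>i\<in>K. \<forall>j < 3 * 2 ^ n. c i j = v i j" using Z K by (auto simp: c_def)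
  ultimately show ?thesis by blast
qed

end

interpretation fs: vector_space "fscale :: 'a::field \<Rightarrow> (nat \<Rightarrow> nat \<Rightarrow> 'a) \<Rightarrow> _"
  by unfold_locales (auto simp: fscale_def fun_eq_iff algebra_simps)

lemma sum_fun_app: "(sum F A) x = sum (\<lambda>a. F a x) A"
  by (induction A rule: infinite_finite_induct) auto

context
  fixes n k :: nat and lam :: "nat \<Rightarrow> nat \<Rightarrow> 'f::field"
  assumes finF: "finite (UNIV :: 'f set)"
    and k1: "1 \<le> k" and kn: "k < n"
    and injl: "inj_on (\<lambda>(i, j). lam i j) ({1..n} \<times> {0, 1})"
begin

lemma subspace_C: "module.subspace fscale (paper_code n k lam)"
  unfolding fs.subspace_def
  using zero_C[OF finF k1 kn injl] add_C[OF finF k1 kn injl] scale_C[OF finF k1 kn injl] by blast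

lemma dim_C: "vector_space.dim fscale (paper_code n k lam) = k * (3 * 2 ^ n)"
proof -
  let ?C = "paper_code n k lam"
  let ?l = "3 * 2 ^ n :: nat"
  define X where "X = {1..k} \<times> {..<?l}"
  define P where "P x c \<longleftrightarrow> c \<in> ?C \<and> (\<forall>i\<in>{1..k}. \<forall>j<?l. c i j = (if i = fst x \<and> j = snd x then 1 else 0))" for x c
  define E where "E x = (SOME c. P x c)" for x
  have K0: "{1..k} \<subseteq> {1..n}" "card {1..k} = k" using kn by auto
  have PE: "P x (E x)" for x
  proof -
    obtain c where "c \<in> ?C" "\<forall>i\<in>{1..k}. \<forall>j<?l. c i j = (\<lambda>i j. if i = fst x \<and> j = snd x then (1::'f) else 0) i j"
      using info_exists[OF finF k1 kn injl K0, of "\<lambda>i j. if i = fst x \<and> j = snd x then (1::'f) else 0"] by auto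
    then have "P x c" by (simp add: P_def)
    then show ?thesis unfolding E_def by (rule someI[of "P x"])
  qed
  have EC: "E x \<in> ?C" for x using PE[of x] by (simp add: P_def)
  have Eval: "E x i j = (if i = fst x \<and> j = snd x then 1 else 0)" if "i \<in> {1..k}" "j < ?l" for x i j
    using PE[of x] that by (simp add: P_def)
  have finX: "finite X" by (simp add: X_def)
  have injE: "inj_on E X"
  proof (rule inj_onI)
    fix x y assume x: "x \<in> X" and y: "y \<in> X" and eq: "E x = E y"
    have "E x (fst x) (snd x) = 1" using x by (auto simp: Eval X_def)
    moreover have "E y (fst x) (snd x) = (if fst x = fst y \<and> snd x = snd y then 1 else 0)"
      using x by (intro Eval) (auto simp: X_def)
    ultimately show "x = y" using eq by (auto split: if_splits simp: prod_eq_iff)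
  qed
  define B where "B = E ` X"
  have finB: "finite B" using finX by (simp add: B_def)
  have cardB: "card B = k * ?l" using card_image[OF injE] by (simp add: B_def X_def)
  have BC: "B \<subseteq> ?C" using EC by (auto simp: B_def)
  have indep: "fs.independent B"
  proof (rule fs.independent_if_scalars_zero[OF finB])
    fix f x assume s0: "(\<Sum>x\<in>B. fscale (f x) x) = 0" and xB: "x \<in> B"
    then obtain y where y: "y \<in> X" and xy: "x = E y" by (auto simp: B_def)
    have "0 = (\<Sum>b\<in>B. fscale (f b) b) (fst y) (snd y)" using s0 by simp
    also have "\<dots> = (\<Sum>b\<in>B. f b * b (fst y) (snd y))" by (simp add: sum_fun_app fscale_def)
    also have "\<dots> = (\<Sum>b\<in>B. if b = x then f b else 0)"
    proof (intro sum.cong refl)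
      fix b assume "b \<in> B"
      then obtain z where z: "z \<in> X" and bz: "b = E z" by (auto simp: B_def)
      have "b (fst y) (snd y) = (if fst y = fst z \<and> snd y = snd z then 1 else 0)"
      proof -
        have y1: "fst y \<in> {1..k}" and y2: "snd y < 3 * 2 ^ n" using y unfolding X_def by (simp_all add: mem_Times_iff)
        have "E z (fst y) (snd y) = (if fst y = fst z \<and> snd y = snd z then 1 else 0)" using Eval[of "fst y" "snd y" z] y1 y2 by blast
        then show ?thesis using bz by (simp only:)
      qed
      moreover have "(fst y = fst z \<and> snd y = snd z) \<longleftrightarrow> b = x"
        using inj_on_eq_iff[OF injE y z] bz xy by (auto simp: prod_eq_iff)
      ultimately show "f b * b (fst y) (snd y) = (if b = x then f b else 0)" by auto
    qed
    also have "\<dots> = f x" using finB xB by simp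
    finally show "f x = 0" by simp
  qed
  have span: "?C \<subseteq> fs.span B"
  proof
    fix c assume c: "c \<in> ?C"
    define s where "s = (\<Sum>x\<in>X. fscale (c (fst x) (snd x)) (E x))"
    have sC: "s \<in> ?C" unfolding s_def
      by (rule fs.subspace_sum[OF subspace_C]) (auto intro!: fs.subspace_scale[OF subspace_C] EC)
    have "c = s"
    proof (rule uniq_C[OF finF k1 kn injl c sC K0], intro ballI allI impI)
      fix i j assume i: "i \<in> {1..k}" and j: "j < ?l"
      have "s i j = (\<Sum>x\<in>X. c (fst x) (snd x) * E x i j)"
        by (simp add: s_def sum_fun_app fscale_def)
      also have "\<dots> = (\<Sum>x\<in>X. if x = (i, j) then c i j else 0)"
        using i j by (intro sum.cong refl) (auto simp: Eval prod_eq_iff)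
      also have "\<dots> = c i j" using i j finX by (simp add: X_def)
      finally show "c i j = s i j" by simp
    qed
    moreover have "s \<in> fs.span B" unfolding s_def
      by (intro fs.span_sum fs.span_scale fs.span_base) (auto simp: B_def)
    ultimately show "c \<in> fs.span B" by simp
  qed
  show ?thesis using fs.dim_unique[OF BC span indep cardB] .
qed

end

definition sb :: "nat \<Rightarrow> nat \<Rightarrow> nat \<Rightarrow> nat" where
  "sb a i v = (if v = 0 then unset_bit (i - 1) a else set_bit (i - 1) a)"

lemma bin_digit_bit: "bin_digit a i = (if bit a (i - 1) then 1 else 0)"
  unfolding bin_digit_def bit_iff_odd by (simp add: odd_iff_mod_2_eq_one)

lemma bd_sb_same: "v \<le> 1 \<Longrightarrow> bin_digit (sb a i v) i = v"
  unfolding bin_digit_bit sb_def by (auto simp: bit_simps)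

lemma bd_sb_other: "i \<ge> 1 \<Longrightarrow> i' \<ge> 1 \<Longrightarrow> i' \<noteq> i \<Longrightarrow> bin_digit (sb a i v) i' = bin_digit a i'"
  unfolding bin_digit_bit sb_def by (auto simp: bit_simps)

lemma sb_less: "a < 2 ^ n \<Longrightarrow> i \<in> {1..n} \<Longrightarrow> sb a i v < 2 ^ n"
proof -
  assume a: "a < 2 ^ n" and i: "i \<in> {1..n}"
  have "take_bit n a = a" using a by (simp add: take_bit_nat_eq_self_iff)
  then have "take_bit n (sb a i v) = sb a i v"
    using i unfolding sb_def by (auto simp: take_bit_set_bit_eq take_bit_unset_bit_eq)
  then show ?thesis by (simp add: take_bit_nat_eq_self_iff)
qed

lemma bit_eq_bd: "(\<forall>i\<ge>1. bin_digit a i = bin_digit b i) \<Longrightarrow> a = (b::nat)"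
proof (rule bit_eqI)
  fix m assume h: "\<forall>i\<ge>1. bin_digit a i = bin_digit b i"
  have "bin_digit a (m+1) = bin_digit b (m+1)" using h by simp
  then show "bit a m \<longleftrightarrow> bit b m" unfolding bin_digit_bit by (auto split: if_splits)
qed

lemma sb_sb: "i \<ge> 1 \<Longrightarrow> v \<le> 1 \<Longrightarrow> w \<le> 1 \<Longrightarrow> sb (sb a i v) i w = sb a i w"
  by (rule bit_eq_bd) (metis bd_sb_other bd_sb_same)

lemma sb_self: "i \<ge> 1 \<Longrightarrow> sb a i (bin_digit a i) = a"
  by (rule bit_eq_bd) (metis bd_sb_other bd_sb_same bin_digit_le1)

context
  fixes n k :: nat and lam :: "nat \<Rightarrow> nat \<Rightarrow> 'f::field"
  assumes finF: "finite (UNIV :: 'f set)"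
    and k1: "1 \<le> k" and kn: "k < n"
    and injl: "inj_on (\<lambda>(i, j). lam i j) ({1..n} \<times> {0, 1})"
begin

lemma col_C: "c \<in> paper_code n k lam \<Longrightarrow> t < n - k \<Longrightarrow> b \<in> {1,2,3} \<Longrightarrow> a < 2 ^ n \<Longrightarrow>
   (\<Sum>i = 1..n. lam i (bin_digit a i) ^ t * c i ((b - 1) * 2 ^ n + a)) = 0"
  unfolding paper_code_def by blast

lemma two_col:
  assumes d: "d \<in> paper_code n k lam" and b: "b \<in> {1,2,3}" "b' \<in> {1,2,3}"
    and a: "a < 2 ^ n" "a' < 2 ^ n" and u: "u \<in> {1..n}"
    and du: "bin_digit a u \<noteq> bin_digit a' u"
    and deq: "\<forall>i\<in>{1..n}. i \<noteq> u \<longrightarrow> bin_digit a i = bin_digit a' i"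
    and S: "S \<subseteq> {1..n}" "u \<notin> S" "k + 1 \<le> card S"
    and hz: "\<forall>i\<in>S. d i ((b - 1) * 2 ^ n + a) + d i ((b' - 1) * 2 ^ n + a') = 0"
  shows "d u ((b - 1) * 2 ^ n + a) = 0 \<and> d u ((b' - 1) * 2 ^ n + a') = 0 \<and>
    (\<forall>i\<in>{1..n}. i \<noteq> u \<longrightarrow> d i ((b - 1) * 2 ^ n + a) + d i ((b' - 1) * 2 ^ n + a') = 0)"
proof -
  define p where "p = (b - 1) * 2 ^ n + a"
  define q where "q = (b' - 1) * 2 ^ n + a'"
  define P where "P i = (if i = 0 then lam u (bin_digit a' u) else lam i (bin_digit a i))" for i
  define Y where "Y i = (if i = 0 then d u q else if i = u then d u p else d i p + d i q)" for i
  have u0: "u \<noteq> 0" using u by simp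
  have injP: "inj_on P {0..n}"
  proof (rule inj_onI)
    fix i j assume i: "i \<in> {0..n}" and j: "j \<in> {0..n}" and eq: "P i = P j"
    have lu: False if "i' \<in> {1..n}" "lam u (bin_digit a' u) = lam i' (bin_digit a i')" for i'
    proof -
      have "u = i' \<and> bin_digit a' u = bin_digit a i'"
        by (rule lam_inj[OF finF k1 kn injl u that(1) bin_digit_01 bin_digit_01 that(2)])
      then show False using du by (metis)
    qed
    show "i = j"
    proof (cases "i = 0"; cases "j = 0")
      assume i0: "i \<noteq> 0" and j0: "j \<noteq> 0"
      then have i1: "i \<in> {1..n}" and j1: "j \<in> {1..n}" using i j by auto
      have "lam i (bin_digit a i) = lam j (bin_digit a j)" using eq i0 j0 by (simp add: P_def)
      then show ?thesis using inj_onD[OF inj_col[OF finF k1 kn injl, of a] _ i1 j1] by simp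
    next
      assume "i = 0" "j \<noteq> 0"
      then show ?thesis using lu[of j] eq j by (simp add: P_def)
    next
      assume "i \<noteq> 0" "j = 0"
      then show ?thesis using lu[of i] eq i by (simp add: P_def)
    qed simp
  qed
  have mom: "\<forall>t<n-k. (\<Sum>i\<in>{0..n}. P i ^ t * Y i) = 0"
  proof (intro allI impI)
    fix t assume t: "t < n - k"
    have colp: "(\<Sum>i = 1..n. lam i (bin_digit a i) ^ t * d i p) = 0"
      unfolding p_def by (rule col_C[OF d t b(1) a(1)])
    have colq: "(\<Sum>i = 1..n. lam i (bin_digit a' i) ^ t * d i q) = 0"
      unfolding q_def by (rule col_C[OF d t b(2) a(2)])
    have "{0..n} = insert 0 {1..n}" by auto
    then have "(\<Sum>i\<in>{0..n}. P i ^ t * Y i) = P 0 ^ t * Y 0 + (\<Sum>i\<in>{1..n}. P i ^ t * Y i)"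
      by simp
    also have "(\<Sum>i\<in>{1..n}. P i ^ t * Y i) = (\<Sum>i\<in>{1..n}. lam i (bin_digit a i) ^ t * d i p
        + (if i = u then 0 else lam i (bin_digit a' i) ^ t * d i q))"
      using deq u0 by (intro sum.cong refl) (auto simp: P_def Y_def distrib_left)
    also have "\<dots> = (\<Sum>i\<in>{1..n}. lam i (bin_digit a i) ^ t * d i p)
        + (\<Sum>i\<in>{1..n}. (if i = u then 0 else lam i (bin_digit a' i) ^ t * d i q))"
      by (rule sum.distrib)
    also have "(\<Sum>i\<in>{1..n}. (if i = u then 0 else lam i (bin_digit a' i) ^ t * d i q))
        = (\<Sum>i\<in>{1..n}. lam i (bin_digit a' i) ^ t * d i q) - lam u (bin_digit a' u) ^ t * d u q"
    proof -
      have "(\<Sum>i\<in>{1..n}. lam i (bin_digit a' i) ^ t * d i q) = lam u (bin_digit a' u) ^ t * d u q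
          + (\<Sum>i\<in>{1..n} - {u}. lam i (bin_digit a' i) ^ t * d i q)"
        using u by (simp add: sum.remove)
      moreover have "(\<Sum>i\<in>{1..n}. (if i = u then 0 else lam i (bin_digit a' i) ^ t * d i q))
          = (\<Sum>i\<in>{1..n} - {u}. lam i (bin_digit a' i) ^ t * d i q)"
        using u by (simp add: sum.remove)
      ultimately show ?thesis by simp
    qed
    finally show "(\<Sum>i\<in>{0..n}. P i ^ t * Y i) = 0"
      using colp colq by (simp add: P_def Y_def)
  qed
  have "card {i\<in>{0..n}. Y i \<noteq> 0} \<le> n - k"
  proof -
    have "{i\<in>{0..n}. Y i \<noteq> 0} \<subseteq> {0..n} - S"
    proof (intro subsetI)
      fix i assume i: "i \<in> {i\<in>{0..n}. Y i \<noteq> 0}"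
      show "i \<in> {0..n} - S"
      proof (rule ccontr)
        assume "i \<notin> {0..n} - S"
        then have iS: "i \<in> S" using i by simp
        then have "i \<noteq> 0" "i \<noteq> u" using S by auto
        then have "Y i = d i p + d i q" by (simp add: Y_def)
        also have "\<dots> = 0" using hz iS by (simp add: p_def q_def)
        finally show False using i by simp
      qed
    qed
    moreover have "card ({0..n} - S) = n + 1 - card S"
      using S by (subst card_Diff_subset) (auto intro: finite_subset)
    ultimately have "card {i\<in>{0..n}. Y i \<noteq> 0} \<le> n + 1 - card S"
      by (metis card_mono finite_Diff finite_atLeastAtMost)
    then show ?thesis using S(3) by linarith
  qed
  from support_zero[OF _ injP mom this] have Y0: "\<forall>i\<in>{0..n}. Y i = 0" by simp
  have "Y 0 = 0" "Y u = 0" using Y0 u by auto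
  then have "d u q = 0" "d u p = 0" using u0 by (auto simp: Y_def)
  moreover have "\<forall>i\<in>{1..n}. i \<noteq> u \<longrightarrow> d i p + d i q = 0"
  proof (intro ballI impI)
    fix i assume "i \<in> {1..n}" "i \<noteq> u"
    then show "d i p + d i q = 0" using Y0[rule_format, of i] by (auto simp: Y_def)
  qed
  ultimately show ?thesis by (simp add: p_def q_def)
qed

end

definition phi1 :: "nat \<Rightarrow> nat \<Rightarrow> nat \<Rightarrow> (nat \<Rightarrow> 'f::field) \<Rightarrow> 'f" where
  "phi1 n i1 a x = x ((bin_digit a i1) * 2 ^ n + sb a i1 0) + x ((bin_digit a i1) * 2 ^ n + sb a i1 1)"

definition phi2 :: "nat \<Rightarrow> nat \<Rightarrow> nat \<Rightarrow> nat \<Rightarrow> (nat \<Rightarrow> 'f::field) \<Rightarrow> 'f" where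
  "phi2 n i1 i2 a x = x (2 * 2 ^ n + a) + x ((bin_digit a i1) * 2 ^ n + sb a i2 (1 - bin_digit a i2))"

lemma phi1_diff: "phi1 n i1 a (x - y) = phi1 n i1 a x - phi1 n i1 a y"
  by (simp add: phi1_def)
lemma phi2_diff: "phi2 n i1 i2 a (x - y) = phi2 n i1 i2 a x - phi2 n i1 i2 a y"
  by (simp add: phi2_def)

context
  fixes n k :: nat and lam :: "nat \<Rightarrow> nat \<Rightarrow> 'f::field"
  assumes finF: "finite (UNIV :: 'f set)"
    and k1: "1 \<le> k" and kn: "k < n"
    and injl: "inj_on (\<lambda>(i, j). lam i j) ({1..n} \<times> {0, 1})"
  fixes i1 i2 :: nat and Rs :: "nat set"
  assumes i1: "i1 \<in> {1..n}" and i2: "i2 \<in> {1..n}" and i12: "i1 \<noteq> i2"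
    and Rs: "Rs \<subseteq> {1..n} - {i1, i2}" and cRs: "card Rs = k + 1"
begin

lemma Z1:
  assumes d: "d \<in> paper_code n k lam" and a: "a < 2 ^ n"
    and z: "\<forall>j\<in>Rs. phi1 n i1 a (d j) = 0"
  shows "d i1 ((bin_digit a i1) * 2 ^ n + sb a i1 0) = 0 \<and> d i1 ((bin_digit a i1) * 2 ^ n + sb a i1 1) = 0
     \<and> phi1 n i1 a (d i2) = 0"
proof -
  have b: "1 + bin_digit a i1 \<in> {1,2,3}" using bin_digit_01[of a i1] by auto
  have a0: "sb a i1 0 < 2 ^ n" and a1: "sb a i1 1 < 2 ^ n" using sb_less[OF a i1] by auto
  have du: "bin_digit (sb a i1 0) i1 \<noteq> bin_digit (sb a i1 1) i1" using bd_sb_same[of 0 a i1] bd_sb_same[of 1 a i1] by simp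
  have deq: "\<forall>i\<in>{1..n}. i \<noteq> i1 \<longrightarrow> bin_digit (sb a i1 0) i = bin_digit (sb a i1 1) i"
    using i1 by (auto simp: bd_sb_other)
  have S: "Rs \<subseteq> {1..n}" "i1 \<notin> Rs" "k + 1 \<le> card Rs" using Rs cRs by auto
  have hz: "\<forall>i\<in>Rs. d i ((1 + bin_digit a i1 - 1) * 2 ^ n + sb a i1 0) + d i ((1 + bin_digit a i1 - 1) * 2 ^ n + sb a i1 1) = 0"
    using z by (simp add: phi1_def)
  from two_col[OF finF k1 kn injl d b b a0 a1 i1 du deq S hz] i2 i12
  show ?thesis by (simp add: phi1_def)
qed

lemma Z2:
  assumes d: "d \<in> paper_code n k lam" and a: "a < 2 ^ n"
    and z: "\<forall>j\<in>Rs. phi2 n i1 i2 a (d j) = 0"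
  shows "d i2 (2 * 2 ^ n + a) = 0 \<and> d i2 ((bin_digit a i1) * 2 ^ n + sb a i2 (1 - bin_digit a i2)) = 0
     \<and> phi2 n i1 i2 a (d i1) = 0"
proof -
  have b: "3 \<in> {1::nat,2,3}" "1 + bin_digit a i1 \<in> {1,2,3}" using bin_digit_01[of a i1] by auto
  have a1: "sb a i2 (1 - bin_digit a i2) < 2 ^ n" using sb_less[OF a i2] by auto
  have du: "bin_digit a i2 \<noteq> bin_digit (sb a i2 (1 - bin_digit a i2)) i2"
    using bd_sb_same[of "1 - bin_digit a i2" a i2] bin_digit_01[of a i2] by auto
  have deq: "\<forall>i\<in>{1..n}. i \<noteq> i2 \<longrightarrow> bin_digit a i = bin_digit (sb a i2 (1 - bin_digit a i2)) i"
    using i2 by (auto simp: bd_sb_other)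
  have S: "Rs \<subseteq> {1..n}" "i2 \<notin> Rs" "k + 1 \<le> card Rs" using Rs cRs by auto
  have hz: "\<forall>i\<in>Rs. d i ((3 - 1) * 2 ^ n + a) + d i ((1 + bin_digit a i1 - 1) * 2 ^ n + sb a i2 (1 - bin_digit a i2)) = 0"
    using z by (simp add: phi2_def)
  from two_col[OF finF k1 kn injl d b a a1 i2 du deq S hz] i1 i12
  show ?thesis by (simp add: phi2_def)
qed

lemma R1:
  assumes d: "d \<in> paper_code n k lam"
    and z1: "\<forall>a<2^n. \<forall>j\<in>Rs. phi1 n i1 a (d j) = 0"
    and z2: "\<forall>a<2^n. phi2 n i1 i2 a (d i1) = 0"
  shows "d i1 = (\<lambda>_. 0)"
proof -
  have low: "d i1 (v * 2 ^ n + a') = 0" if v: "v \<le> 1" and a': "a' < 2 ^ n" for v a'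
  proof -
    define a where "a = sb a' i1 v"
    have a: "a < 2 ^ n" using sb_less[OF a' i1] by (simp add: a_def)
    have bda: "bin_digit a i1 = v" using bd_sb_same[OF v] by (simp add: a_def)
    have Z: "d i1 (v * 2 ^ n + sb a i1 0) = 0 \<and> d i1 (v * 2 ^ n + sb a i1 1) = 0"
      using Z1[OF d a] z1 a bda by auto
    have i1g: "i1 \<ge> 1" using i1 by simp
    have "a' = sb a i1 (bin_digit a' i1)"
      unfolding a_def using sb_sb[OF i1g v bin_digit_le1] sb_self[OF i1g] by simp
    then show ?thesis using Z bin_digit_01[of a' i1] by (metis empty_iff insert_iff)
  qed
  have high: "d i1 (2 * 2 ^ n + a) = 0" if a: "a < 2 ^ n" for a
  proof -
    have "phi2 n i1 i2 a (d i1) = 0" using z2 a by simp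
    moreover have "d i1 ((bin_digit a i1) * 2 ^ n + sb a i2 (1 - bin_digit a i2)) = 0"
      by (rule low[OF bin_digit_le1 sb_less[OF a i2]])
    ultimately show ?thesis by (simp add: phi2_def)
  qed
  show ?thesis
  proof (rule ext)
    fix j
    show "d i1 j = 0"
    proof (cases "j < 3 * 2 ^ n")
      case False
      then show ?thesis using arr_zero[OF finF k1 kn injl d] by simp
    next
      case True
      then obtain b a where b: "b \<in> {1::nat,2,3}" and a: "a < 2 ^ n" and j: "j = (b - 1) * 2 ^ n + a"
        using pos_decomp by blast
      show ?thesis
      proof (cases "b = 3")
        case True
        then show ?thesis using high[OF a] j by simp
      next
        case False
        then have "b - 1 \<le> 1" using b by auto
        then show ?thesis using low[OF _ a] j by simp
      qed
    qed
  qed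
qed

lemma R2:
  assumes d: "d \<in> paper_code n k lam"
    and z2: "\<forall>a<2^n. \<forall>j\<in>Rs. phi2 n i1 i2 a (d j) = 0"
    and z1: "\<forall>a<2^n. phi1 n i1 a (d i2) = 0"
  shows "d i2 = (\<lambda>_. 0)"
proof -
  have i1g: "i1 \<ge> 1" using i1 by simp
  have i2g: "i2 \<ge> 1" using i2 by simp
  have high: "d i2 (2 * 2 ^ n + a) = 0" if a: "a < 2 ^ n" for a
    using Z2[OF d a] z2 a by auto
  have lowm: "d i2 (v * 2 ^ n + a') = 0" if v: "v = bin_digit a' i1" and a': "a' < 2 ^ n" for v a'
  proof -
    define a where "a = sb a' i2 (1 - bin_digit a' i2)"
    have a: "a < 2 ^ n" using sb_less[OF a' i2] by (simp add: a_def)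
    have bda: "bin_digit a i1 = v" using bd_sb_other[OF i2g i1g i12] v by (simp add: a_def)
    have bda2: "1 - bin_digit a i2 = bin_digit a' i2"
      using bd_sb_same[of "1 - bin_digit a' i2" a' i2] bin_digit_01[of a' i2] by (auto simp: a_def)
    have "sb a i2 (1 - bin_digit a i2) = sb a i2 (bin_digit a' i2)" using bda2 by simp
    also have "\<dots> = a'" unfolding a_def
      using sb_sb[OF i2g _ bin_digit_le1, of "1 - bin_digit a' i2" a' a' i2] sb_self[OF i2g, of a'] by simp
    finally have "sb a i2 (1 - bin_digit a i2) = a'" .
    then show ?thesis using Z2[OF d a] z2 a bda by auto
  qed
  have low: "d i2 (v * 2 ^ n + a') = 0" if v: "v \<le> 1" and a': "a' < 2 ^ n" for v a'
  proof (cases "v = bin_digit a' i1")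
    case True
    then show ?thesis using lowm a' by simp
  next
    case False
    define a where "a = sb a' i1 v"
    have a: "a < 2 ^ n" using sb_less[OF a' i1] by (simp add: a_def)
    have bda: "bin_digit a i1 = v" using bd_sb_same[OF v] by (simp add: a_def)
    have p: "phi1 n i1 a (d i2) = 0" using z1 a by simp
    have e1: "sb a i1 (bin_digit a' i1) = a'"
      unfolding a_def using sb_sb[OF i1g v bin_digit_le1] sb_self[OF i1g] by simp
    have e2: "sb a i1 v = a"
      unfolding a_def using sb_sb[OF i1g v v] by simp
    have other: "d i2 (v * 2 ^ n + a) = 0" using lowm[OF _ a] bda by simp
    have bv: "bin_digit a' i1 = 1 - v" using False bin_digit_01[of a' i1] v by auto
    show ?thesis
    proof (cases "v = 0")
      case True
      then have "bin_digit a' i1 = 1" using bv by simp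
      then show ?thesis using p other e1 e2 True by (simp add: phi1_def bda)
    next
      case False
      then have "v = 1" "bin_digit a' i1 = 0" using bv v by auto
      then show ?thesis using p other e1 e2 by (simp add: phi1_def bda)
    qed
  qed
  show ?thesis
  proof (rule ext)
    fix j
    show "d i2 j = 0"
    proof (cases "j < 3 * 2 ^ n")
      case False
      then show ?thesis using arr_zero[OF finF k1 kn injl d] by simp
    next
      case True
      then obtain b a where b: "b \<in> {1::nat,2,3}" and a: "a < 2 ^ n" and j: "j = (b - 1) * 2 ^ n + a"
        using pos_decomp by blast
      show ?thesis
      proof (cases "b = 3")
        case True
        then show ?thesis using high[OF a] j by simp
      next
        case False
        then have "b - 1 \<le> 1" using b by auto
        then show ?thesis using low[OF _ a] j by simp
      qed
    qed
  qed
qed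

lemma scheme: "coop_repairable (paper_code n k lam) {i1, i2} Rs (2 * (k + 2) * 2 ^ n)"
proof -
  let ?C = "paper_code n k lam"
  define g :: "nat \<Rightarrow> nat \<Rightarrow> (nat \<Rightarrow> 'f) \<Rightarrow> 'f list" where
    "g = (\<lambda>j i x. if i = i1 then map (\<lambda>a. phi1 n i1 a x) [0..<2^n] else map (\<lambda>a. phi2 n i1 i2 a x) [0..<2^n])"
  define h :: "nat \<Rightarrow> nat \<Rightarrow> (nat \<Rightarrow> 'f list) \<Rightarrow> 'f list" where
    "h = (\<lambda>i i' Y. let c = (SOME c. c \<in> ?C \<and> downloaded g Rs i c = Y) in
       (if i' = i1 then map (\<lambda>a. phi2 n i1 i2 a (c i1)) [0..<2^n] else map (\<lambda>a. phi1 n i1 a (c i2)) [0..<2^n]))"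
  define E where "E c i = (\<lambda>i'. if i' \<in> {i1, i2} \<and> i' \<noteq> i then h i' i (downloaded g Rs i' c) else [])" for c i
  define rec where "rec = (\<lambda>i D X. (SOME c. c \<in> ?C \<and> downloaded g Rs i c = D \<and> E c i = X) i)"
  have dl1: "downloaded g Rs i1 c = downloaded g Rs i1 c' \<longleftrightarrow> (\<forall>a<2^n. \<forall>j\<in>Rs. phi1 n i1 a (c j - c' j) = 0)" for c c'
    unfolding downloaded_def g_def fun_eq_iff phi1_diff by (auto simp: map_eq_conv)
  have dl2: "downloaded g Rs i2 c = downloaded g Rs i2 c' \<longleftrightarrow> (\<forall>a<2^n. \<forall>j\<in>Rs. phi2 n i1 i2 a (c j - c' j) = 0)" for c c'
    using i12 unfolding downloaded_def g_def fun_eq_iff phi2_diff by (auto simp: map_eq_conv)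
  have h21: "h i2 i1 (downloaded g Rs i2 c) = map (\<lambda>a. phi2 n i1 i2 a (c i1)) [0..<2^n]" if c: "c \<in> ?C" for c
  proof -
    define c' where "c' = (SOME c'. c' \<in> ?C \<and> downloaded g Rs i2 c' = downloaded g Rs i2 c)"
    have "c' \<in> ?C \<and> downloaded g Rs i2 c' = downloaded g Rs i2 c"
      unfolding c'_def by (rule someI[of _ c]) (use c in simp)
    then have c': "c' \<in> ?C" and z: "\<forall>a<2^n. \<forall>j\<in>Rs. phi2 n i1 i2 a ((c' - c) j) = 0"
      using dl2 by auto
    have dC: "c' - c \<in> ?C" by (rule diff_C[OF finF k1 kn injl c' c])
    have "\<forall>a<2^n. phi2 n i1 i2 a ((c' - c) i1) = 0" using Z2[OF dC] z by blast
    then have "\<forall>a<2^n. phi2 n i1 i2 a (c' i1) = phi2 n i1 i2 a (c i1)" by (simp add: phi2_diff)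
    then show ?thesis unfolding h_def c'_def[symmetric] Let_def by (simp add: map_eq_conv)
  qed
  have h12: "h i1 i2 (downloaded g Rs i1 c) = map (\<lambda>a. phi1 n i1 a (c i2)) [0..<2^n]" if c: "c \<in> ?C" for c
  proof -
    define c' where "c' = (SOME c'. c' \<in> ?C \<and> downloaded g Rs i1 c' = downloaded g Rs i1 c)"
    have "c' \<in> ?C \<and> downloaded g Rs i1 c' = downloaded g Rs i1 c"
      unfolding c'_def by (rule someI[of _ c]) (use c in simp)
    then have c': "c' \<in> ?C" and z: "\<forall>a<2^n. \<forall>j\<in>Rs. phi1 n i1 a ((c' - c) j) = 0"
      using dl1 by auto
    have dC: "c' - c \<in> ?C" by (rule diff_C[OF finF k1 kn injl c' c])
    have "\<forall>a<2^n. phi1 n i1 a ((c' - c) i2) = 0" using Z1[OF dC] z by blast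
    then have "\<forall>a<2^n. phi1 n i1 a (c' i2) = phi1 n i1 a (c i2)" by (simp add: phi1_diff)
    then show ?thesis unfolding h_def c'_def[symmetric] Let_def using i12 by (simp add: map_eq_conv)
  qed
  have recc: "rec i (downloaded g Rs i c) (E c i) = c i" if i: "i \<in> {i1, i2}" and c: "c \<in> ?C" for i c
  proof -
    define c' where "c' = (SOME c'. c' \<in> ?C \<and> downloaded g Rs i c' = downloaded g Rs i c \<and> E c' i = E c i)"
    have "c' \<in> ?C \<and> downloaded g Rs i c' = downloaded g Rs i c \<and> E c' i = E c i"
      unfolding c'_def by (rule someI[of _ c]) (use c in simp)
    then have c': "c' \<in> ?C" and dl: "downloaded g Rs i c' = downloaded g Rs i c" and Ee: "E c' i = E c i"
      by auto
    have dC: "c' - c \<in> ?C" by (rule diff_C[OF finF k1 kn injl c' c])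
    have "c' i = c i"
    proof (cases "i = i1")
      case True
      have "h i2 i1 (downloaded g Rs i2 c') = h i2 i1 (downloaded g Rs i2 c)"
        using fun_cong[OF Ee, of i2] True i12 by (simp add: E_def)
      then have "\<forall>a<2^n. phi2 n i1 i2 a (c' i1) = phi2 n i1 i2 a (c i1)"
        unfolding h21[OF c'] h21[OF c] by (simp add: map_eq_conv)
      then have z2: "\<forall>a<2^n. phi2 n i1 i2 a ((c' - c) i1) = 0" by (simp add: phi2_diff)
      have z1: "\<forall>a<2^n. \<forall>j\<in>Rs. phi1 n i1 a ((c' - c) j) = 0" using dl True dl1 by simp
      have "(c' - c) i1 = (\<lambda>_. 0)" by (rule R1[OF dC z1 z2])
      then show ?thesis using True by (simp add: fun_eq_iff)
    next
      case False
      then have ii2: "i = i2" using i by simp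
      have "h i1 i2 (downloaded g Rs i1 c') = h i1 i2 (downloaded g Rs i1 c)"
        using fun_cong[OF Ee, of i1] ii2 i12 by (simp add: E_def)
      then have "\<forall>a<2^n. phi1 n i1 a (c' i2) = phi1 n i1 a (c i2)"
        unfolding h12[OF c'] h12[OF c] by (simp add: map_eq_conv)
      then have z1: "\<forall>a<2^n. phi1 n i1 a ((c' - c) i2) = 0" by (simp add: phi1_diff)
      have z2: "\<forall>a<2^n. \<forall>j\<in>Rs. phi2 n i1 i2 a ((c' - c) j) = 0" using dl ii2 dl2 by simp
      have "(c' - c) i2 = (\<lambda>_. 0)" by (rule R2[OF dC z2 z1])
      then show ?thesis using ii2 by (simp add: fun_eq_iff)
    qed
    then show ?thesis unfolding rec_def c'_def by simp
  qed
  have lg: "\<forall>j\<in>Rs. \<forall>i\<in>{i1,i2}. \<forall>x. length (g j i x) = 2 ^ n" by (simp add: g_def)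
  have lh: "\<forall>i\<in>{i1,i2}. \<forall>i'\<in>{i1,i2}. i \<noteq> i' \<longrightarrow> (\<forall>y. length (h i i' y) = 2 ^ n)"
    by (simp add: h_def Let_def)
  have fin: "finite Rs" using Rs finite_subset by blast
  have N: "2 * (k + 2) * 2 ^ n = (\<Sum>i\<in>{i1,i2}. \<Sum>j\<in>Rs. (2::nat) ^ n) + (\<Sum>i\<in>{i1,i2}. \<Sum>i'\<in>{i1,i2} - {i}. (2::nat) ^ n)"
    using i12 cRs by (simp add: insert_Diff_if algebra_simps)
  show ?thesis unfolding coop_repairable_def
    apply (rule exI[of _ "\<lambda>_ _. 2 ^ n"], rule exI[of _ g], rule exI[of _ "\<lambda>_ _. 2 ^ n"], rule exI[of _ h], rule exI[of _ rec])
    using lg lh recc N unfolding E_def by auto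
qed

end

lemma card_lists_UNIV: "finite (UNIV::'a set) \<Longrightarrow> card {xs::'a list. length xs = m} = card (UNIV::'a set) ^ m"
  using card_lists_length_eq[of "UNIV::'a set" m] by simp

lemma finite_lists_UNIV: "finite (UNIV::'a set) \<Longrightarrow> finite {xs::'a list. length xs = m}"
  using finite_lists_length_eq[of "UNIV::'a set" m] by simp

lemma card_PiE_lists: "finite (UNIV::'a set) \<Longrightarrow> finite T \<Longrightarrow>
    card (PiE T (\<lambda>j. {xs::'a list. length xs = f j})) = card (UNIV::'a set) ^ (\<Sum>j\<in>T. f j)"
  by (simp add: card_PiE card_lists_UNIV power_sum)

lemma finite_PiE_lists: "finite (UNIV::'a set) \<Longrightarrow> finite T \<Longrightarrow>
    finite (PiE T (\<lambda>j. {xs::'a list. length xs = f j}))"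
  by (intro finite_PiE finite_lists_UNIV)

lemma card_funs: "finite (UNIV::'a set) \<Longrightarrow> card (PiE {..<m} (\<lambda>_. UNIV::'a set)) = card (UNIV::'a set) ^ m"
  by (simp add: card_PiE)

lemma card_field_ge2: "finite (UNIV::'f::field set) \<Longrightarrow> 2 \<le> card (UNIV::'f set)"
proof -
  assume f: "finite (UNIV::'f set)"
  have "card {0::'f, 1} = 2" by simp
  moreover have "card {0::'f, 1} \<le> card (UNIV::'f set)" using f by (intro card_mono) auto
  ultimately show ?thesis by simp
qed

lemma count_exp:
  fixes Dat :: "'a \<Rightarrow> 'b"
  assumes q: "2 \<le> (q::nat)" and inj: "inj_on Dat V" and img: "Dat ` V \<subseteq> W" and finW: "finite W"
    and cV: "card V = q ^ x" and cW: "card W = q ^ y"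
  shows "x \<le> y"
proof -
  have "q ^ x \<le> q ^ y" using card_inj_on_le[OF inj img finW] cV cW by simp
  then show ?thesis using q by (simp add: power_le_imp_le_exp)
qed

lemma mod_shift_inj: "(s + e) mod m = (s' + e) mod (m::nat) \<Longrightarrow> s mod m = s' mod m"
  using mod_eq_iff_dvd_symdiff_nat[of "s+e" m "s'+e"] mod_eq_iff_dvd_symdiff_nat[of s m s'] by simp

lemma bij_shift: "0 < m \<Longrightarrow> bij_betw (\<lambda>s. (s + e) mod m) {..<m} {..<(m::nat)}"
proof -
  assume m: "0 < m"
  have inj: "inj_on (\<lambda>s. (s + e) mod m) {..<m}"
  proof (rule inj_onI)
    fix x y assume x: "x \<in> {..<m}" and y: "y \<in> {..<m}" and eq: "(x + e) mod m = (y + e) mod m"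
    have "x mod m = y mod m" by (rule mod_shift_inj[OF eq])
    then show "x = y" using x y by simp
  qed
  have "(\<lambda>s. (s + e) mod m) ` {..<m} \<subseteq> {..<m}" using m by auto
  then have "(\<lambda>s. (s + e) mod m) ` {..<m} = {..<m}" using endo_inj_surj[OF _ _ inj] by simp
  then show ?thesis using inj by (simp add: bij_betw_def)
qed

lemma cyc_sum: "0 < m \<Longrightarrow> (\<Sum>s<m. \<Sum>e<q. F ((s + e) mod m)) = q * (\<Sum>s<(m::nat). F s :: nat)"
proof -
  assume m: "0 < m"
  have "(\<Sum>s<m. \<Sum>e<q. F ((s + e) mod m)) = (\<Sum>e<q. \<Sum>s<m. F ((s + e) mod m))"
    by (rule sum.swap)
  also have "\<dots> = (\<Sum>e<q. \<Sum>s<m. F s)"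
    using sum.reindex_bij_betw[OF bij_shift[OF m], of F] by simp
  finally show ?thesis by simp
qed

lemma window:
  assumes m: "0 < m" and q: "q \<le> m" and s: "s < (m::nat)" and sig: "bij_betw \<sigma> {..<m} R"
  shows "\<sigma> ` ((\<lambda>e. (s + e) mod m) ` {..<q}) \<subseteq> R"
    and "card (\<sigma> ` ((\<lambda>e. (s + e) mod m) ` {..<q})) = q"
    and "(\<Sum>j\<in>\<sigma> ` ((\<lambda>e. (s + e) mod m) ` {..<q}). f j) = (\<Sum>e<q. f (\<sigma> ((s + e) mod m)))"
proof -
  have sub: "(\<lambda>e. (s + e) mod m) ` {..<q} \<subseteq> {..<m}" using m by auto
  have inj1: "inj_on (\<lambda>e. (s + e) mod m) {..<q}"
  proof (rule inj_onI)
    fix e e' assume "e \<in> {..<q}" "e' \<in> {..<q}" "(s + e) mod m = (s + e') mod m"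
    then show "e = e'" using mod_shift_inj[of e s m e'] q by (simp add: add.commute)
  qed
  have inj2: "inj_on \<sigma> ((\<lambda>e. (s + e) mod m) ` {..<q})"
    using sig sub by (meson bij_betw_def inj_on_subset)
  show "\<sigma> ` ((\<lambda>e. (s + e) mod m) ` {..<q}) \<subseteq> R" using sig sub by (auto simp: bij_betw_def)
  show "card (\<sigma> ` ((\<lambda>e. (s + e) mod m) ` {..<q})) = q"
    using card_image[OF inj2] card_image[OF inj1] by simp
  show "(\<Sum>j\<in>\<sigma> ` ((\<lambda>e. (s + e) mod m) ` {..<q}). f j) = (\<Sum>e<q. f (\<sigma> ((s + e) mod m)))"
    using sum.reindex[OF inj2, of f] sum.reindex[OF inj1, of "\<lambda>x. f (\<sigma> x)"] by (simp add: comp_def)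
qed

lemma arith_final:
  fixes k B1 B2 g12 g21 T :: nat
  assumes k: "1 \<le> k"
    and h1: "(k+1) * (3*T) \<le> 2 * B1 + (k+1) * g21"
    and h2: "(k+1) * (3*T) \<le> 2 * B2 + (k+1) * g12"
    and h3: "2 \<le> k \<Longrightarrow> (k+1) * (2 * (3*T)) \<le> 3 * B1 + 3 * B2"
  shows "2 * (k + 2) * T \<le> B1 + B2 + g12 + g21"
proof (cases "k = 1")
  case True
  then show ?thesis using h1 h2 by simp
next
  case False
  then have k2: "2 \<le> k" using k by simp
  define j where "j = k - 1"
  have kj: "k = j + 1" using k by (simp add: j_def)
  have H3: "j * ((k+1) * (2 * (3*T))) \<le> j * (3 * B1 + 3 * B2)" using h3[OF k2] by simp
  have "3 * (k+1) * (2 * (k + 2) * T) \<le> 3 * (k+1) * (B1 + B2 + g12 + g21)"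
    using h1 h2 H3 unfolding kj by (simp add: algebra_simps)
  then show ?thesis by simp
qed

context
  fixes n k :: nat and lam :: "nat \<Rightarrow> nat \<Rightarrow> 'f::field"
  assumes finF: "finite (UNIV :: 'f set)"
    and k1: "1 \<le> k" and kn: "k < n"
    and injl: "inj_on (\<lambda>(i, j). lam i j) ({1..n} \<times> {0, 1})"
  fixes i1 i2 :: nat and Rs :: "nat set"
  assumes i1: "i1 \<in> {1..n}" and i2: "i2 \<in> {1..n}" and i12: "i1 \<noteq> i2"
    and Rs: "Rs \<subseteq> {1..n} - {i1, i2}" and cRs: "card Rs = k + 1"
  fixes beta :: "nat \<Rightarrow> nat \<Rightarrow> nat" and g :: "nat \<Rightarrow> nat \<Rightarrow> (nat \<Rightarrow> 'f) \<Rightarrow> 'f list"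
    and gamma :: "nat \<Rightarrow> nat \<Rightarrow> nat" and h :: "nat \<Rightarrow> nat \<Rightarrow> (nat \<Rightarrow> 'f list) \<Rightarrow> 'f list"
    and rec :: "nat \<Rightarrow> (nat \<Rightarrow> 'f list) \<Rightarrow> (nat \<Rightarrow> 'f list) \<Rightarrow> (nat \<Rightarrow> 'f)"
  assumes lg: "\<forall>j\<in>Rs. \<forall>i\<in>{i1,i2}. \<forall>x. length (g j i x) = beta j i"
    and lh: "\<forall>i\<in>{i1,i2}. \<forall>i'\<in>{i1,i2}. i \<noteq> i' \<longrightarrow> (\<forall>y. length (h i i' y) = gamma i i')"
    and rc: "\<forall>i\<in>{i1,i2}. \<forall>c\<in>paper_code n k lam.
         rec i (downloaded g Rs i c)
               (\<lambda>i'. if i' \<in> {i1,i2} \<and> i' \<noteq> i then h i' i (downloaded g Rs i' c) else [])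
         = c i"
begin

lemma finRs: "finite Rs" using Rs finite_subset by blast

lemma cut1:
  assumes i: "i \<in> {i1, i2}" and i': "i' \<in> {i1, i2}" and ii': "i \<noteq> i'"
    and T: "T \<subseteq> Rs" "card T = 2"
  shows "3 * 2 ^ n \<le> (\<Sum>j\<in>T. beta j i) + gamma i' i"
proof -
  let ?C = "paper_code n k lam"
  let ?l = "3 * 2 ^ n :: nat"
  define K where "K = (Rs - T) \<union> {i}"
  have finT: "finite T" using T finRs finite_subset by blast
  have iRs: "i \<notin> Rs" using Rs i by auto
  have KS: "K \<subseteq> {1..n}" using Rs i i1 i2 by (auto simp: K_def)
  have cK: "card K = k"
  proof -
    have "card (Rs - T) = k - 1" using T cRs by (simp add: card_Diff_subset finT)
    moreover have "card K = card (Rs - T) + 1" unfolding K_def using iRs finRs by simp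
    ultimately show ?thesis using k1 by simp
  qed
  define V where "V = (PiE {..<?l} (\<lambda>_. UNIV) :: (nat \<Rightarrow> 'f) set)"
  define P where "P v c \<longleftrightarrow> c \<in> ?C \<and> (\<forall>j\<in>K. \<forall>p<?l. c j p = (if j = i then v p else 0))" for v c
  define cw where "cw v = (SOME c. P v c)" for v
  have Pcw: "P v (cw v)" for v
  proof -
    obtain c where "c \<in> ?C" "\<forall>j\<in>K. \<forall>p<?l. c j p = (\<lambda>j p. if j = i then v p else (0::'f)) j p"
      using info_exists[OF finF k1 kn injl KS cK, of "\<lambda>j p. if j = i then v p else (0::'f)"] by blast
    then have "P v c" by (simp add: P_def)
    then show ?thesis unfolding cw_def by (rule someI[of "P v"])
  qed
  have cwC: "cw v \<in> ?C" for v using Pcw[of v] by (simp add: P_def)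
  have cwi: "cw v i p = v p" if "p < ?l" for v p using Pcw[of v] that by (simp add: P_def K_def)
  have cw0: "cw v j = (\<lambda>_. 0)" if "j \<in> Rs - T" for v j
  proof
    fix p show "cw v j p = 0"
    proof (cases "p < ?l")
      case True then show ?thesis using Pcw[of v] that iRs by (auto simp: P_def K_def)
    next
      case False then show ?thesis using arr_zero[OF finF k1 kn injl cwC] by simp
    qed
  qed
  define W where "W = PiE T (\<lambda>j. {xs::'f list. length xs = beta j i}) \<times> {xs::'f list. length xs = gamma i' i}"
  define Dat where "Dat v = (restrict (\<lambda>j. g j i (cw v j)) T, h i' i (downloaded g Rs i' (cw v)))" for v
  have img: "Dat ` V \<subseteq> W"
    using lg lh i i' ii' T(1) unfolding Dat_def W_def by (auto simp: PiE_def extensional_def)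
  have inj: "inj_on Dat V"
  proof (rule inj_onI)
    fix v w assume v: "v \<in> V" and w: "w \<in> V" and eq: "Dat v = Dat w"
    have d1: "downloaded g Rs i (cw v) = downloaded g Rs i (cw w)"
    proof
      fix j
      show "downloaded g Rs i (cw v) j = downloaded g Rs i (cw w) j"
      proof (cases "j \<in> T")
        case True
        then show ?thesis using fun_cong[OF arg_cong[OF eq, of fst], of j] T(1)
          by (auto simp: Dat_def downloaded_def)
      next
        case False
        then show ?thesis using cw0[of j v] cw0[of j w] by (auto simp: downloaded_def)
      qed
    qed
    have e1: "(\<lambda>i''. if i'' \<in> {i1,i2} \<and> i'' \<noteq> i then h i'' i (downloaded g Rs i'' (cw v)) else [])
        = (\<lambda>i''. if i'' \<in> {i1,i2} \<and> i'' \<noteq> i then h i'' i (downloaded g Rs i'' (cw w)) else [])"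
    proof
      fix i''
      have "i'' \<in> {i1,i2} \<and> i'' \<noteq> i \<longrightarrow> i'' = i'" using i i' ii' by auto
      then show "(if i'' \<in> {i1,i2} \<and> i'' \<noteq> i then h i'' i (downloaded g Rs i'' (cw v)) else [])
        = (if i'' \<in> {i1,i2} \<and> i'' \<noteq> i then h i'' i (downloaded g Rs i'' (cw w)) else [])"
        using arg_cong[OF eq, of snd] by (auto simp: Dat_def)
    qed
    have r1: "rec i (downloaded g Rs i (cw v))
       (\<lambda>i''. if i'' \<in> {i1,i2} \<and> i'' \<noteq> i then h i'' i (downloaded g Rs i'' (cw v)) else []) = cw v i"
      using rc i cwC[of v] by blast
    have r2: "rec i (downloaded g Rs i (cw w))
       (\<lambda>i''. if i'' \<in> {i1,i2} \<and> i'' \<noteq> i then h i'' i (downloaded g Rs i'' (cw w)) else []) = cw w i"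
      using rc i cwC[of w] by blast
    have cvw: "cw v i = cw w i" using r1 r2 unfolding d1 e1 by simp
    have "\<forall>p<?l. v p = w p"
    proof (intro allI impI)
      fix p assume p: "p < ?l"
      show "v p = w p" using cwi[OF p, of v] cwi[OF p, of w] cvw by simp
    qed
    then show "v = w" using v w unfolding V_def by (intro PiE_ext) auto
  qed
  have finW: "finite W" unfolding W_def using finF finT
    by (intro finite_cartesian_product finite_PiE_lists finite_lists_UNIV)
  have cW: "card W = card (UNIV::'f set) ^ ((\<Sum>j\<in>T. beta j i) + gamma i' i)"
    unfolding W_def using finF finT by (simp add: card_cartesian_product card_PiE_lists card_lists_UNIV power_add)
  have cV: "card V = card (UNIV::'f set) ^ ?l" unfolding V_def using finF by (rule card_funs)
  show ?thesis by (rule count_exp[OF card_field_ge2[OF finF] inj img finW cV cW])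
qed

lemma cut2:
  assumes k2: "2 \<le> k" and T: "T \<subseteq> Rs" "card T = 3"
  shows "2 * (3 * 2 ^ n) \<le> (\<Sum>j\<in>T. beta j i1) + (\<Sum>j\<in>T. beta j i2)"
proof -
  let ?C = "paper_code n k lam"
  let ?l = "3 * 2 ^ n :: nat"
  define K where "K = (Rs - T) \<union> {i1, i2}"
  have finT: "finite T" using T finRs finite_subset by blast
  have iRs: "i1 \<notin> Rs" "i2 \<notin> Rs" using Rs by auto
  have KS: "K \<subseteq> {1..n}" using Rs i1 i2 by (auto simp: K_def)
  have cK: "card K = k"
  proof -
    have "card (Rs - T) = k - 2" using T cRs by (simp add: card_Diff_subset finT)
    moreover have "card K = card (Rs - T) + 2" unfolding K_def using iRs finRs i12 by simp
    ultimately show ?thesis using k2 by simp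
  qed
  define V where "V = (PiE {..<2 * ?l} (\<lambda>_. UNIV) :: (nat \<Rightarrow> 'f) set)"
  define vv where "vv v j p = (if j = i1 then v p else if j = i2 then v (?l + p) else 0)" for v :: "nat \<Rightarrow> 'f" and j p
  define P where "P v c \<longleftrightarrow> c \<in> ?C \<and> (\<forall>j\<in>K. \<forall>p<?l. c j p = vv v j p)" for v c
  define cw where "cw v = (SOME c. P v c)" for v
  have Pcw: "P v (cw v)" for v
  proof -
    obtain c where "c \<in> ?C" "\<forall>j\<in>K. \<forall>p<?l. c j p = vv v j p"
      using info_exists[OF finF k1 kn injl KS cK, of "vv v"] by blast
    then have "P v c" by (simp add: P_def)
    then show ?thesis unfolding cw_def by (rule someI[of "P v"])
  qed
  have cwC: "cw v \<in> ?C" for v using Pcw[of v] by (simp add: P_def)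
  have cwi1: "cw v i1 p = v p" if "p < ?l" for v p using Pcw[of v] that by (simp add: P_def K_def vv_def)
  have cwi2: "cw v i2 p = v (?l + p)" if "p < ?l" for v p using Pcw[of v] that i12 by (simp add: P_def K_def vv_def)
  have cw0: "cw v j = (\<lambda>_. 0)" if "j \<in> Rs - T" for v j
  proof
    fix p show "cw v j p = 0"
    proof (cases "p < ?l")
      case True then show ?thesis using Pcw[of v] that iRs by (auto simp: P_def K_def vv_def)
    next
      case False then show ?thesis using arr_zero[OF finF k1 kn injl cwC] by simp
    qed
  qed
  define W where "W = PiE T (\<lambda>j. {xs::'f list. length xs = beta j i1}) \<times> PiE T (\<lambda>j. {xs::'f list. length xs = beta j i2})"
  define Dat where "Dat v = (restrict (\<lambda>j. g j i1 (cw v j)) T, restrict (\<lambda>j. g j i2 (cw v j)) T)" for v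
  have img: "Dat ` V \<subseteq> W"
    using lg T(1) unfolding Dat_def W_def by (auto simp: PiE_def extensional_def)
  have inj: "inj_on Dat V"
  proof (rule inj_onI)
    fix v w assume v: "v \<in> V" and w: "w \<in> V" and eq: "Dat v = Dat w"
    have d: "downloaded g Rs i (cw v) = downloaded g Rs i (cw w)" if i: "i \<in> {i1, i2}" for i
    proof
      fix j
      show "downloaded g Rs i (cw v) j = downloaded g Rs i (cw w) j"
      proof (cases "j \<in> T")
        case True
        then show ?thesis using fun_cong[OF arg_cong[OF eq, of fst], of j] fun_cong[OF arg_cong[OF eq, of snd], of j] T(1) i
          by (auto simp: Dat_def downloaded_def)
      next
        case False
        then show ?thesis using cw0[of j v] cw0[of j w] by (auto simp: downloaded_def)
      qed
    qed
    have e: "(\<lambda>i''. if i'' \<in> {i1,i2} \<and> i'' \<noteq> i then h i'' i (downloaded g Rs i'' (cw v)) else [])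
        = (\<lambda>i''. if i'' \<in> {i1,i2} \<and> i'' \<noteq> i then h i'' i (downloaded g Rs i'' (cw w)) else [])" for i
    proof
      fix i''
      show "(if i'' \<in> {i1,i2} \<and> i'' \<noteq> i then h i'' i (downloaded g Rs i'' (cw v)) else [])
        = (if i'' \<in> {i1,i2} \<and> i'' \<noteq> i then h i'' i (downloaded g Rs i'' (cw w)) else [])"
        using d[of i''] by simp
    qed
    have cvw: "cw v i = cw w i" if i: "i \<in> {i1, i2}" for i
    proof -
      have r1: "rec i (downloaded g Rs i (cw v))
         (\<lambda>i''. if i'' \<in> {i1,i2} \<and> i'' \<noteq> i then h i'' i (downloaded g Rs i'' (cw v)) else []) = cw v i"
        using rc i cwC[of v] by blast
      have r2: "rec i (downloaded g Rs i (cw w))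
         (\<lambda>i''. if i'' \<in> {i1,i2} \<and> i'' \<noteq> i then h i'' i (downloaded g Rs i'' (cw w)) else []) = cw w i"
        using rc i cwC[of w] by blast
      show ?thesis using r1 r2 unfolding d[OF i] e by simp
    qed
    have "\<forall>p<2 * ?l. v p = w p"
    proof (intro allI impI)
      fix p assume p: "p < 2 * ?l"
      show "v p = w p"
      proof (cases "p < ?l")
        case True
        then show ?thesis using cwi1[OF True, of v] cwi1[OF True, of w] cvw[of i1] by simp
      next
        case False
        then have p': "p - ?l < ?l" "?l + (p - ?l) = p" using p by auto
        show ?thesis using cwi2[OF p'(1), of v] cwi2[OF p'(1), of w] cvw[of i2] p'(2) by simp
      qed
    qed
    then show "v = w" using v w unfolding V_def by (intro PiE_ext) auto
  qed
  have finW: "finite W" unfolding W_def using finF finT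
    by (intro finite_cartesian_product finite_PiE_lists)
  have cW: "card W = card (UNIV::'f set) ^ ((\<Sum>j\<in>T. beta j i1) + (\<Sum>j\<in>T. beta j i2))"
    unfolding W_def using finF finT by (simp add: card_cartesian_product card_PiE_lists power_add)
  have cV: "card V = card (UNIV::'f set) ^ (2 * ?l)" unfolding V_def using finF by (rule card_funs)
  show ?thesis by (rule count_exp[OF card_field_ge2[OF finF] inj img finW cV cW])
qed

lemma lower:
  "2 * (k + 2) * 2 ^ n \<le> (\<Sum>i\<in>{i1,i2}. \<Sum>j\<in>Rs. beta j i) + (\<Sum>i\<in>{i1,i2}. \<Sum>i'\<in>{i1,i2} - {i}. gamma i i')"
proof -
  define m where "m = k + 1"
  have m0: "0 < m" by (simp add: m_def)
  obtain \<sigma> where sig: "bij_betw \<sigma> {..<m} Rs"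
    using ex_bij_betw_nat_finite[OF finRs] cRs by (auto simp: m_def lessThan_atLeast0)
  define B1 where "B1 = (\<Sum>j\<in>Rs. beta j i1)"
  define B2 where "B2 = (\<Sum>j\<in>Rs. beta j i2)"
  have B1s: "B1 = (\<Sum>s<m. beta (\<sigma> s) i1)" unfolding B1_def using sum.reindex_bij_betw[OF sig, of "\<lambda>j. beta j i1"] by simp
  have B2s: "B2 = (\<Sum>s<m. beta (\<sigma> s) i2)" unfolding B2_def using sum.reindex_bij_betw[OF sig, of "\<lambda>j. beta j i2"] by simp
  have avg1: "m * (3 * 2 ^ n) \<le> 2 * (\<Sum>s<m. beta (\<sigma> s) i) + m * gamma i' i"
    if i: "i \<in> {i1, i2}" and i': "i' \<in> {i1, i2}" and ii': "i \<noteq> i'" for i i'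
  proof -
    have q: "2 \<le> m" using k1 by (simp add: m_def)
    have each: "3 * 2 ^ n \<le> (\<Sum>e<2. beta (\<sigma> ((s + e) mod m)) i) + gamma i' i" if s: "s < m" for s
      using cut1[OF i i' ii' window(1)[OF m0 q s sig] window(2)[OF m0 q s sig]]
      unfolding window(3)[OF m0 q s sig, of "\<lambda>j. beta j i"] .
    have "m * (3 * 2 ^ n) = (\<Sum>s<m. 3 * 2 ^ n)" by simp
    also have "\<dots> \<le> (\<Sum>s<m. (\<Sum>e<2. beta (\<sigma> ((s + e) mod m)) i) + gamma i' i)"
      by (rule sum_mono) (use each in simp)
    also have "\<dots> = 2 * (\<Sum>s<m. beta (\<sigma> s) i) + m * gamma i' i"
      by (simp add: sum.distrib cyc_sum[OF m0, where q=2 and F="\<lambda>s. beta (\<sigma> s) i"])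
    finally show ?thesis .
  qed
  have h1: "(k+1) * (3 * 2 ^ n) \<le> 2 * B1 + (k+1) * gamma i2 i1"
    using avg1[of i1 i2] i12 B1s by (simp add: m_def)
  have h2: "(k+1) * (3 * 2 ^ n) \<le> 2 * B2 + (k+1) * gamma i1 i2"
    using avg1[of i2 i1] i12 B2s by (simp add: m_def)
  have h3: "(k+1) * (2 * (3 * 2 ^ n)) \<le> 3 * B1 + 3 * B2" if k2: "2 \<le> k"
  proof -
    have q: "3 \<le> m" using k2 by (simp add: m_def)
    have each: "2 * (3 * 2 ^ n) \<le> (\<Sum>e<3. beta (\<sigma> ((s + e) mod m)) i1) + (\<Sum>e<3. beta (\<sigma> ((s + e) mod m)) i2)"
      if s: "s < m" for s
      using cut2[OF k2 window(1)[OF m0 q s sig] window(2)[OF m0 q s sig]]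
      unfolding window(3)[OF m0 q s sig, of "\<lambda>j. beta j i1"] window(3)[OF m0 q s sig, of "\<lambda>j. beta j i2"] .
    have "m * (2 * (3 * 2 ^ n)) = (\<Sum>s<m. 2 * (3 * 2 ^ n))" by simp
    also have "\<dots> \<le> (\<Sum>s<m. (\<Sum>e<3. beta (\<sigma> ((s + e) mod m)) i1) + (\<Sum>e<3. beta (\<sigma> ((s + e) mod m)) i2))"
      by (rule sum_mono) (use each in simp)
    also have "\<dots> = 3 * B1 + 3 * B2"
      by (simp add: sum.distrib B1s B2s cyc_sum[OF m0, where q=3 and F="\<lambda>s. beta (\<sigma> s) i1"] cyc_sum[OF m0, where q=3 and F="\<lambda>s. beta (\<sigma> s) i2"])
    finally show ?thesis by (simp add: m_def)
  qed
  have N: "(\<Sum>i\<in>{i1,i2}. \<Sum>j\<in>Rs. beta j i) + (\<Sum>i\<in>{i1,i2}. \<Sum>i'\<in>{i1,i2} - {i}. gamma i i')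
      = B1 + B2 + gamma i1 i2 + gamma i2 i1"
    using i12 by (simp add: B1_def B2_def insert_Diff_if)
  show ?thesis unfolding N by (rule arith_final[OF k1 h1 h2 h3])
qed

end

theorem mainTheorem1:
  fixes n k :: nat and lam :: "nat \<Rightarrow> nat \<Rightarrow> 'f::field"
  assumes "finite (UNIV :: 'f set)"
    and "1 \<le> k" and "k < n"
    and "card (UNIV :: 'f set) \<ge> 2 * n"
    and "inj_on (\<lambda>(i, j). lam i j) ({1..n} \<times> {0, 1})"
  shows "MSR_coop n k (3 * 2 ^ n) 2 (k + 1) (paper_code n k lam)"
proof -
  note finF = assms(1) and k1 = assms(2) and kn = assms(3) and injl = assms(5)
  let ?C = "paper_code n k lam"
  have MDS: "MDS_array_code n k (3 * 2 ^ n) ?C"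
    unfolding MDS_array_code_def
  proof (intro conjI allI impI ballI)
    show "?C \<subseteq> array_space n (3 * 2 ^ n)" unfolding paper_code_def by auto
    show "module.subspace fscale ?C" by (rule subspace_C[OF finF k1 kn injl])
    show "vector_space.dim fscale ?C = k * (3 * 2 ^ n)" by (rule dim_C[OF finF k1 kn injl])
  next
    fix K c c' assume K: "K \<subseteq> {1..n} \<and> card K = k" and c: "c \<in> ?C" and c': "c' \<in> ?C"
      and eq: "\<forall>i\<in>K. c i = c' i"
    show "c = c'" using uniq_C[OF finF k1 kn injl c c'] K eq by auto
  qed
  have rep: "real (N_co ?C Fs Rs) = real (2 * (k + 1 + 2 - 1) * (3 * 2 ^ n)) / (real 2 + real (k + 1) - real k)"
    if FR: "Fs \<subseteq> {1..n} \<and> card Fs = 2 \<and> Rs \<subseteq> {1..n} - Fs \<and> card Rs = k + 1" for Fs Rs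
  proof -
    obtain i1 i2 where Fs: "Fs = {i1, i2}" and i12: "i1 \<noteq> i2"
      using FR by (auto simp: card_2_iff)
    have i1: "i1 \<in> {1..n}" and i2: "i2 \<in> {1..n}" using FR Fs by auto
    have Rs: "Rs \<subseteq> {1..n} - {i1, i2}" and cRs: "card Rs = k + 1" using FR Fs by auto
    have up: "coop_repairable ?C Fs Rs (2 * (k + 2) * 2 ^ n)"
      unfolding Fs by (rule scheme[OF finF k1 kn injl i1 i2 i12 Rs cRs])
    have lo: "2 * (k + 2) * 2 ^ n \<le> N" if N: "coop_repairable ?C Fs Rs N" for N
    proof -
      from N obtain beta :: "nat \<Rightarrow> nat \<Rightarrow> nat" and g :: "nat \<Rightarrow> nat \<Rightarrow> (nat \<Rightarrow> 'f) \<Rightarrow> 'f list"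
        and gamma :: "nat \<Rightarrow> nat \<Rightarrow> nat" and h :: "nat \<Rightarrow> nat \<Rightarrow> (nat \<Rightarrow> 'f list) \<Rightarrow> 'f list"
        and rec :: "nat \<Rightarrow> (nat \<Rightarrow> 'f list) \<Rightarrow> (nat \<Rightarrow> 'f list) \<Rightarrow> (nat \<Rightarrow> 'f)" where
        lg: "\<forall>j\<in>Rs. \<forall>i\<in>{i1,i2}. \<forall>x. length (g j i x) = beta j i"
        and lh: "\<forall>i\<in>{i1,i2}. \<forall>i'\<in>{i1,i2}. i \<noteq> i' \<longrightarrow> (\<forall>y. length (h i i' y) = gamma i i')"
        and rc: "\<forall>i\<in>{i1,i2}. \<forall>c\<in>?C.
         rec i (downloaded g Rs i c)
               (\<lambda>i'. if i' \<in> {i1,i2} \<and> i' \<noteq> i then h i' i (downloaded g Rs i' c) else [])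
         = c i"
        and NN: "N = (\<Sum>i\<in>{i1,i2}. \<Sum>j\<in>Rs. beta j i) + (\<Sum>i\<in>{i1,i2}. \<Sum>i'\<in>{i1,i2} - {i}. gamma i i')"
        using N unfolding coop_repairable_def Fs
        apply (elim exE conjE)
        apply (rule that)
           apply assumption+
        done
      show ?thesis unfolding NN by (rule lower[OF finF k1 kn injl i1 i2 i12 Rs cRs lg lh rc])
    qed
    have "N_co ?C Fs Rs = 2 * (k + 2) * 2 ^ n"
      unfolding N_co_def by (rule Least_equality[where P = "coop_repairable ?C Fs Rs", OF up lo])
    then show ?thesis by simp
  qed
  show ?thesis unfolding MSR_coop_def
  proof (intro conjI allI impI)
    show "MDS_array_code n k (3 * 2 ^ n) ?C" by (rule MDS)
  next
    fix Fs Rs assume "Fs \<subseteq> {1..n} \<and> card Fs = 2 \<and> Rs \<subseteq> {1..n} - Fs \<and> card Rs = k + 1"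
    then show "real (N_co ?C Fs Rs) = real (2 * (k + 1 + 2 - 1) * (3 * 2 ^ n)) / (real 2 + real (k + 1) - real k)"
      by (rule rep)
  qed
qed

end
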